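(* Let $d\in\mathbb{N}$, $\kappa\in(0,\infty)$, and let $\mathfrak{l}\colon\mathbb{R}^d\times\mathbb{R}^d\to\mathbb{R}$ satisfy $\mathfrak{l}(\theta,\vartheta)=\frac{\kappa}{2}\|\theta-\vartheta\|^2$ for all $\theta,\vartheta\in\mathbb{R}^d$. Let $\gamma\in(0,2/\kappa)$, let $(\Omega,\mathcal{F},\mathbb{P})$ be a probability space, let $X_{n,m}\colon\Omega\to\mathbb{R}^d$, $n,m\in\mathbb{Z}$, be i.i.d. random variables, let $M,\mathfrak{M}\in\mathbb{N}$, and let $\Theta\colon\mathbb{N}_0\times\Omega\to\mathbb{R}^d$ satisfy for all $n\in\mathbb{N}$ $$\Theta_n=\Theta_{n-1}-\frac{\gamma}{M}\Big[\sum_{m=1}^M(\nabla_\theta\mathfrak{l})(\Theta_{n-1},X_{n,m})\Big].$$ Assume $\sup_{n,m\in\mathbb{Z}}\|X_{n,m}(\omega)\|<\infty$ for every $\omega\in\Omega$, and that $(X_{n,m})_{(n,m)\in\mathbb{Z}^2}$ and $\Theta_0$ are independent. Let $$\chi=\sum_{n=0}^\infty\frac{\kappa\gamma(1-\kappa\gamma)^n}{M}\Big[\sum_{m=1}^M X_{-n,m}\Big]$$ and assume $$\mathbb{P}\Big(\Big\|(1-\kappa\gamma)\chi+\frac{\kappa\gamma}{M}\sum_{m=1}^M X_{1,m}-\frac{1}{\mathfrak{M}}\sum_{m=1}^{\mathfrak{M}}X_{2,m}\Big\|>\Big\|\chi-\frac{1}{\mathfrak{M}}\sum_{m=1}^{\mathfrak{M}}X_{2,m}\Big\|\Big)>0.$$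 Let $N\in\mathbb{N}$. Then $$\mathbb{P}\Big(\bigcup_{n=N}^\infty\Big\{\sum_{m=1}^{\mathfrak{M}}\mathfrak{l}(\Theta_n,X_{n,-m})>\sum_{m=1}^{\mathfrak{M}}\mathfrak{l}(\Theta_{n-1},X_{n,-m})\Big\}\Big)=1.$$
   Context: $\|\cdot\|$ is the Euclidean norm; $\nabla_\theta\mathfrak{l}$ is the gradient in the first argument. *)

theory Defs
  imports "HOL-Probability.Probability"
begin

definition gradient :: "('a::real_inner \<Rightarrow> real) \<Rightarrow> 'a \<Rightarrow> 'a" where
  "gradient f x = (THE g. (f has_derivative (\<lambda>h. g \<bullet> h)) (at x))"

end

theory Submission
  imports Defs
begin


lemma gradient_sq:
  fixes x t :: "'a::real_inner" and k :: real
  shows "gradient (\<lambda>\<theta>. k / 2 * (norm (\<theta> - x))\<^sup>2) t = k *\<^sub>R (t - x)"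
proof -
  have D: "((\<lambda>\<theta>. k / 2 * (norm (\<theta> - x))\<^sup>2) has_derivative (\<lambda>h. (k *\<^sub>R (t - x)) \<bullet> h)) (at t)"
  proof -
    have e: "(\<lambda>\<theta>. k / 2 * (norm (\<theta> - x))\<^sup>2) = (\<lambda>\<theta>. k / 2 * ((\<theta> - x) \<bullet> (\<theta> - x)))"
      by (simp add: power2_norm_eq_inner)
    have "((\<lambda>\<theta>. k / 2 * ((\<theta> - x) \<bullet> (\<theta> - x))) has_derivative
        (\<lambda>h. k / 2 * ((t - x) \<bullet> h + h \<bullet> (t - x)))) (at t)"
      by (auto intro!: derivative_eq_intros)
    moreover have "(\<lambda>h. k / 2 * ((t - x) \<bullet> h + h \<bullet> (t - x))) = (\<lambda>h. (k *\<^sub>R (t - x)) \<bullet> h)"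
      by (rule ext) (simp add: inner_commute algebra_simps)
    ultimately show ?thesis using e by simp
  qed
  show ?thesis unfolding gradient_def
  proof (rule the_equality)
    fix g assume "((\<lambda>\<theta>. k / 2 * (norm (\<theta> - x))\<^sup>2) has_derivative (\<lambda>h. g \<bullet> h)) (at t)"
    from has_derivative_unique[OF this D] have "\<And>h. g \<bullet> h = (k *\<^sub>R (t - x)) \<bullet> h" by metis
    from this[of "g - k *\<^sub>R (t - x)"]
    have "(g - k *\<^sub>R (t - x)) \<bullet> (g - k *\<^sub>R (t - x)) = 0"
      by (simp only: inner_diff_left)
    thus "g = k *\<^sub>R (t - x)" by simp
  qed (rule D)
qed

lemma sumsq_ineq:
  fixes y :: "nat \<Rightarrow> 'a::real_inner" and t s :: 'a and k :: real
  assumes k: "0 < k" and n: "1 \<le> n"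
    and h: "norm (t - (1 / real n) *\<^sub>R (\<Sum>m=1..n. y m)) > norm (s - (1 / real n) *\<^sub>R (\<Sum>m=1..n. y m))"
  shows "(\<Sum>m=1..n. k / 2 * (norm (t - y m))\<^sup>2) > (\<Sum>m=1..n. k / 2 * (norm (s - y m))\<^sup>2)"
proof -
  define Y where "Y = (\<Sum>m=1..n. y m)"
  have ex: "\<And>u. (\<Sum>m=1..n. (norm (u - y m))\<^sup>2) = real n * (u \<bullet> u) - 2 * (u \<bullet> Y) + (\<Sum>m=1..n. y m \<bullet> y m)"
    by (simp add: power2_norm_eq_inner inner_diff_left inner_diff_right sum.distrib sum_subtractf
        Y_def inner_sum_right inner_commute algebra_simps sum_distrib_left)
  have ex2: "\<And>u. (norm (u - (1 / real n) *\<^sub>R Y))\<^sup>2 = u \<bullet> u - 2 / real n * (u \<bullet> Y) + (1 / real n)^2 * (Y \<bullet> Y)"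
    by (simp only: power2_norm_eq_inner) (simp add: inner_diff_left inner_diff_right inner_commute algebra_simps power2_eq_square)
  have "(norm (t - (1 / real n) *\<^sub>R Y))\<^sup>2 > (norm (s - (1 / real n) *\<^sub>R Y))\<^sup>2"
    using h unfolding Y_def by (intro power_strict_mono) auto
  hence "t \<bullet> t - 2 / real n * (t \<bullet> Y) > s \<bullet> s - 2 / real n * (s \<bullet> Y)" unfolding ex2 by simp
  hence "real n * (t \<bullet> t - 2 / real n * (t \<bullet> Y)) > real n * (s \<bullet> s - 2 / real n * (s \<bullet> Y))"
    using n by (intro mult_strict_left_mono) auto
  hence "real n * (t \<bullet> t) - 2 * (t \<bullet> Y) > real n * (s \<bullet> s) - 2 * (s \<bullet> Y)"
    using n by (simp add: algebra_simps)
  hence "(\<Sum>m=1..n. (norm (t - y m))\<^sup>2) > (\<Sum>m=1..n. (norm (s - y m))\<^sup>2)" unfolding ex by simp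
  hence "k / 2 * (\<Sum>m=1..n. (norm (t - y m))\<^sup>2) > k / 2 * (\<Sum>m=1..n. (norm (s - y m))\<^sup>2)"
    using k by (intro mult_strict_left_mono) auto
  thus ?thesis by (simp add: sum_distrib_left)
qed

lemma tail_bound:
  fixes v :: "nat \<Rightarrow> 'a::banach"
  assumes b: "\<And>n. norm (v n) \<le> C * r ^ n" and r: "0 \<le> r" "r < 1"
  shows "summable v" "norm (suminf v - (\<Sum>n<K. v n)) \<le> C * r ^ K / (1 - r)"
proof -
  have sg: "summable (\<lambda>n. C * r ^ n)" using r by (intro summable_mult summable_geometric) auto
  show sv: "summable v" by (rule summable_comparison_test[OF _ sg]) (use b in auto)
  have sgK: "summable (\<lambda>n. C * r ^ (n + K))" using sg by (subst summable_iff_shift)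
  have snK: "summable (\<lambda>n. norm (v (n + K)))"
    by (rule summable_comparison_test[OF _ sgK]) (use b in auto)
  have "suminf v - (\<Sum>n<K. v n) = (\<Sum>n. v (n + K))" using suminf_minus_initial_segment[OF sv] by simp
  also have "norm \<dots> \<le> (\<Sum>n. norm (v (n + K)))" by (rule summable_norm[OF snK])
  also have "\<dots> \<le> (\<Sum>n. C * r ^ (n + K))" by (rule suminf_le[OF _ snK sgK]) (use b in auto)
  also have "(\<Sum>n. C * r ^ (n + K)) = C * r ^ K * (\<Sum>n. r ^ n)"
    by (subst suminf_mult[symmetric]) (use r in \<open>auto simp: power_add mult_ac intro: summable_geometric\<close>)
  also have "\<dots> = C * r ^ K / (1 - r)" using r by (simp add: suminf_geometric)
  finally show "norm (suminf v - (\<Sum>n<K. v n)) \<le> C * r ^ K / (1 - r)" .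
qed




context prob_space begin

lemma bc2:
  fixes Z :: "nat \<Rightarrow> 'a \<Rightarrow> bool"
  assumes ind: "indep_vars (\<lambda>_. count_space UNIV) Z UNIV"
    and pr: "\<And>j. prob {\<omega>\<in>space M. Z j \<omega>} = p" and p: "0 < p"
  shows "AE \<omega> in M. \<forall>n. \<exists>j\<ge>n. Z j \<omega>"
proof -
  have rv[measurable]: "\<And>j. Z j \<in> measurable M (count_space UNIV)" using ind by (simp add: indep_vars_def)
  have ev: "\<And>j. {\<omega>\<in>space M. Z j \<omega>} \<in> events" by measurable
  have p1: "p \<le> 1" using pr[of 0] by (metis prob_le_1)
  have compl: "\<And>j. prob (Z j -` {False} \<inter> space M) = 1 - p"
  proof -
    fix j
    have "Z j -` {False} \<inter> space M = space M - {\<omega>\<in>space M. Z j \<omega>}" by auto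
    thus "prob (Z j -` {False} \<inter> space M) = 1 - p" using prob_compl[OF ev[of j]] pr[of j] by simp
  qed
  have "AE \<omega> in M. \<exists>j\<ge>n. Z j \<omega>" for n
  proof -
    let ?C = "{\<omega>\<in>space M. \<forall>j\<ge>n. \<not> Z j \<omega>}"
    have Cev: "?C \<in> events" by measurable
    have le: "prob ?C \<le> (1 - p) ^ Suc k" for k
    proof -
      have sub: "?C \<subseteq> (\<Inter>j\<in>{n..n+k}. Z j -` {False} \<inter> space M)"
      proof (intro subsetI INT_I)
        fix \<omega> j assume "\<omega> \<in> ?C" "j \<in> {n..n+k}"
        thus "\<omega> \<in> Z j -` {False} \<inter> space M" by simp
      qed
      have sI: "(\<Inter>j\<in>{n..n+k}. Z j -` {False} \<inter> space M) \<in> events"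
        by (intro sets.finite_INT measurable_sets[OF rv]) auto
      have "prob ?C \<le> prob (\<Inter>j\<in>{n..n+k}. Z j -` {False} \<inter> space M)"
        by (rule finite_measure_mono[OF sub sI])
      also have "\<dots> = (\<Prod>j\<in>{n..n+k}. prob (Z j -` {False} \<inter> space M))"
        by (rule indep_varsD[OF ind]) auto
      also have "\<dots> = (1 - p) ^ Suc k" by (simp add: compl)
      finally show ?thesis .
    qed
    have lim: "(\<lambda>k. (1 - p) ^ Suc k) \<longlonglongrightarrow> 0"
      using p p1 by (intro LIMSEQ_Suc[OF LIMSEQ_power_zero]) auto
    have "prob ?C \<le> 0" by (rule LIMSEQ_le_const[OF lim]) (use le in auto)
    hence "prob ?C = 0" by (simp add: antisym measure_nonneg)
    hence "AE \<omega> in M. \<omega> \<notin> ?C" using prob_eq_0[OF Cev] by simp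
    moreover have "AE \<omega> in M. \<omega> \<in> space M" by simp
    ultimately show ?thesis by eventually_elim auto
  qed
  thus ?thesis by (simp add: AE_all_countable)
qed

lemma pattern_prob:
  fixes Xp :: "'i \<Rightarrow> 'a \<Rightarrow> 'b::topological_space"
  assumes ind: "indep_vars (\<lambda>_. borel) Xp UNIV" and D: "\<And>i. distr M borel (Xp i) = D"
    and J: "finite J" "J \<noteq> {}" and inj: "inj_on \<sigma> J"
    and S: "S \<in> sets (PiM J (\<lambda>_. borel))"
  shows "measure M ((\<lambda>\<omega>. \<lambda>i\<in>J. Xp (\<sigma> i) \<omega>) -` S \<inter> space M) = measure (PiM J (\<lambda>_. D)) S"
proof -
  let ?K = "\<sigma> ` J"
  have rv: "\<And>i. Xp i \<in> borel_measurable M" using ind by (simp add: indep_vars_def)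
  have indK: "indep_vars (\<lambda>_. borel) Xp ?K" by (rule indep_vars_subset[OF ind]) auto
  have K: "?K \<noteq> {}" using J by auto
  have dK: "distr M (PiM ?K (\<lambda>_. borel)) (\<lambda>x. \<lambda>i\<in>?K. Xp i x) = PiM ?K (\<lambda>i. distr M borel (Xp i))"
    using indK indep_vars_iff_distr_eq_PiM[OF K rv] by simp
  have pD: "prob_space D" using prob_space_distr[OF rv[of undefined]] D[of undefined] by simp
  have sD: "sets D = sets borel" using D[of undefined] by (metis sets_distr)
  have sJ: "sets (PiM J (\<lambda>_. D)) = sets (PiM J (\<lambda>_. borel))" by (rule sets_PiM_cong) (auto simp: sD)
  have sK: "sets (PiM ?K (\<lambda>_. D)) = sets (PiM ?K (\<lambda>_. borel))" by (rule sets_PiM_cong) (auto simp: sD)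
  have dK': "distr M (PiM ?K (\<lambda>_. D)) (\<lambda>x. \<lambda>i\<in>?K. Xp i x) = PiM ?K (\<lambda>_. D)"
  proof -
    have "distr M (PiM ?K (\<lambda>_. D)) (\<lambda>x. \<lambda>i\<in>?K. Xp i x) = distr M (PiM ?K (\<lambda>_. borel)) (\<lambda>x. \<lambda>i\<in>?K. Xp i x)"
      by (rule distr_cong) (auto simp: sK)
    thus ?thesis using dK D by simp
  qed
  have reidx: "distr (PiM ?K (\<lambda>_. D)) (PiM J (\<lambda>_. D)) (\<lambda>\<omega>. \<lambda>n\<in>J. \<omega> (\<sigma> n)) = PiM J (\<lambda>_. D)"
    using distr_PiM_reindex[of ?K "\<lambda>_. D" \<sigma> J] pD inj by auto
  have mg: "(\<lambda>x. \<lambda>i\<in>?K. Xp i x) \<in> measurable M (PiM ?K (\<lambda>_. D))"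
    unfolding measurable_cong_sets[OF refl sK] by (intro measurable_restrict rv)
  have mh: "(\<lambda>\<omega>. \<lambda>n\<in>J. \<omega> (\<sigma> n)) \<in> measurable (PiM ?K (\<lambda>_. D)) (PiM J (\<lambda>_. D))"
    by (intro measurable_restrict measurable_component_singleton) auto
  have comp: "(\<lambda>\<omega>. \<lambda>n\<in>J. \<omega> (\<sigma> n)) \<circ> (\<lambda>x. \<lambda>i\<in>?K. Xp i x) = (\<lambda>\<omega>. \<lambda>i\<in>J. Xp (\<sigma> i) \<omega>)"
    by (auto simp: fun_eq_iff restrict_def)
  have mf: "(\<lambda>\<omega>. \<lambda>i\<in>J. Xp (\<sigma> i) \<omega>) \<in> measurable M (PiM J (\<lambda>_. D))"
    using measurable_comp[OF mg mh] comp by simp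
  have "measure M ((\<lambda>\<omega>. \<lambda>i\<in>J. Xp (\<sigma> i) \<omega>) -` S \<inter> space M)
      = measure (distr M (PiM J (\<lambda>_. D)) (\<lambda>\<omega>. \<lambda>i\<in>J. Xp (\<sigma> i) \<omega>)) S"
    using measure_distr[OF mf, of S] S sJ by simp
  also have "distr M (PiM J (\<lambda>_. D)) (\<lambda>\<omega>. \<lambda>i\<in>J. Xp (\<sigma> i) \<omega>) = PiM J (\<lambda>_. D)"
    using distr_distr[OF mh mg] comp dK' reidx by simp
  finally show ?thesis .
qed

lemma ess_bound:
  fixes X :: "int \<Rightarrow> int \<Rightarrow> 'a \<Rightarrow> real^'d"
  assumes ind: "indep_vars (\<lambda>_. borel) (\<lambda>(n, m). X n m) UNIV"
    and ident: "\<And>n m. distr M borel (X n m) = distr M borel (X 0 0)"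
    and bdd: "\<And>\<omega>. \<omega> \<in> space M \<Longrightarrow> bdd_above (range (\<lambda>(n, m). norm (X n m \<omega>)))"
  shows "\<exists>b::real. AE \<omega> in M. \<forall>n m. norm (X n m \<omega>) \<le> b"
proof -
  have rv[measurable]: "\<And>n m. X n m \<in> borel_measurable M"
  proof -
    fix n m
    have "random_variable borel ((\<lambda>(n, m). X n m) (n, m))" using ind by (simp only: indep_vars_def) blast
    thus "X n m \<in> borel_measurable M" by simp
  qed
  have bs: "\<And>b::real. {v::real^'d. b < norm v} \<in> sets borel" by measurable
  have pr: "prob {\<omega>\<in>space M. b < norm (X n m \<omega>)} = prob {\<omega>\<in>space M. b < norm (X 0 0 \<omega>)}" for n m b
  proof -
    have "prob {\<omega>\<in>space M. b < norm (X n m \<omega>)} = measure (distr M borel (X n m)) {v. b < norm v}"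
      by (subst measure_distr) (auto intro: bs simp: vimage_def Int_def conj_commute)
    also have "\<dots> = measure (distr M borel (X 0 0)) {v. b < norm v}" by (simp only: ident[of n m])
    also have "\<dots> = prob {\<omega>\<in>space M. b < norm (X 0 0 \<omega>)}"
      by (subst measure_distr) (auto intro: bs simp: vimage_def Int_def conj_commute)
    finally show ?thesis .
  qed
  have "\<exists>b::nat. prob {\<omega>\<in>space M. real b < norm (X 0 0 \<omega>)} = 0"
  proof (rule ccontr)
    assume "\<not> ?thesis"
    hence pos: "\<And>b::nat. prob {\<omega>\<in>space M. real b < norm (X 0 0 \<omega>)} > 0"
      using measure_nonneg by (metis less_eq_real_def)
    have "AE \<omega> in M. \<forall>n. \<exists>j\<ge>n. real b < norm (X (int j) 0 \<omega>)" for b :: nat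
    proof (rule bc2[OF _ _ pos[of b]])
      have i1: "indep_vars (\<lambda>j. PiM {(int j, 0)} (\<lambda>_. borel))
          (\<lambda>j \<omega>. restrict (\<lambda>i. (\<lambda>(n, m). X n m) i \<omega>) {(int j, 0)}) UNIV"
        by (rule indep_vars_restrict[OF ind]) (auto simp: disjoint_family_on_def)
      have i2: "indep_vars (\<lambda>_. count_space UNIV)
          (\<lambda>j \<omega>. (\<lambda>y. real b < norm (y (int j, 0 :: int))) (restrict (\<lambda>i. (\<lambda>(n, m). X n m) i \<omega>) {(int j, 0)})) UNIV"
      proof (rule indep_vars_compose2[OF i1])
        fix j :: nat
        have "(\<lambda>y. y (int j, 0 :: int)) \<in> measurable (PiM {(int j, 0)} (\<lambda>_. borel)) (borel :: (real^'d) measure)"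
          by (rule measurable_component_singleton) auto
        thus "(\<lambda>y. real b < norm (y (int j, 0 :: int))) \<in> measurable (PiM {(int j, 0)} (\<lambda>_. borel)) (count_space UNIV)"
          by measurable
      qed
      show "indep_vars (\<lambda>_. count_space UNIV) (\<lambda>j \<omega>. real b < norm (X (int j) 0 \<omega>)) UNIV"
        using i2 by simp
      show "\<And>j. prob {\<omega>\<in>space M. real b < norm (X (int j) 0 \<omega>)} = prob {\<omega>\<in>space M. real b < norm (X 0 0 \<omega>)}"
        by (rule pr)
    qed
    hence "AE \<omega> in M. \<forall>b::nat. \<forall>n. \<exists>j\<ge>n. real b < norm (X (int j) 0 \<omega>)"
      by (simp add: AE_all_countable)
    moreover have "AE \<omega> in M. \<omega> \<in> space M" by simp
    ultimately have "AE \<omega> in M. False"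
    proof eventually_elim
      case (elim \<omega>)
      show False
      proof -
        from bdd[OF elim(2)] obtain B where B0: "\<forall>x\<in>range (\<lambda>(n, m). norm (X n m \<omega>)). x \<le> B"
          unfolding bdd_above_def by blast
        have B: "norm (X n m \<omega>) \<le> B" for n m
        proof -
          have "(\<lambda>(n, m). norm (X n m \<omega>)) (n, m) \<in> range (\<lambda>(n, m). norm (X n m \<omega>))" by (rule rangeI)
          with B0 show ?thesis by simp
        qed
        obtain b :: nat where "B < real b" using reals_Archimedean2 by blast
        with elim(1) obtain j where "real b < norm (X (int j) 0 \<omega>)" by blast
        with B[of "int j" 0] \<open>B < real b\<close> show False by simp
      qed
    qed
    thus False by (simp add: AE_False)
  qed
  then obtain b :: nat where b: "prob {\<omega>\<in>space M. real b < norm (X 0 0 \<omega>)} = 0" by blast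
  have "AE \<omega> in M. norm (X n m \<omega>) \<le> real b" for n m
  proof -
    have ev: "{\<omega>\<in>space M. real b < norm (X n m \<omega>)} \<in> events" by measurable
    have "prob {\<omega>\<in>space M. real b < norm (X n m \<omega>)} = 0" using pr[of "real b" n m] b by simp
    hence "AE \<omega> in M. \<omega> \<notin> {\<omega>\<in>space M. real b < norm (X n m \<omega>)}"
      using prob_eq_0[OF ev] by blast
    moreover have "AE \<omega> in M. \<omega> \<in> space M" by simp
    ultimately show ?thesis by eventually_elim auto
  qed
  hence "AE \<omega> in M. \<forall>n m. norm (X n m \<omega>) \<le> real b" by (simp add: AE_all_countable)
  thus ?thesis by blast
qed

end



context prob_space begin

lemma pattern_event:
  fixes Xp :: "'i \<Rightarrow> 'a \<Rightarrow> 'b::topological_space" and \<sigma> :: "'j \<Rightarrow> 'i"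
  assumes ind: "indep_vars (\<lambda>_. borel) Xp UNIV"
    and Gcong: "\<And>x y. (\<And>i. i \<in> J \<Longrightarrow> x i = y i) \<Longrightarrow> G x = G y"
    and Gm: "{y\<in>space (PiM J (\<lambda>_. borel)). G y} \<in> sets (PiM J (\<lambda>_. borel))"
  shows "{\<omega>\<in>space M. G (\<lambda>i. Xp (\<sigma> i) \<omega>)} = (\<lambda>\<omega>. \<lambda>i\<in>J. Xp (\<sigma> i) \<omega>) -` {y\<in>space (PiM J (\<lambda>_. borel)). G y} \<inter> space M"
    and "{\<omega>\<in>space M. G (\<lambda>i. Xp (\<sigma> i) \<omega>)} \<in> events"
proof -
  have rv: "\<And>i. Xp i \<in> borel_measurable M" using ind by (simp add: indep_vars_def)
  have mf: "(\<lambda>\<omega>. \<lambda>i\<in>J. Xp (\<sigma> i) \<omega>) \<in> measurable M (PiM J (\<lambda>_. borel))"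
    by (intro measurable_restrict rv)
  show eq: "{\<omega>\<in>space M. G (\<lambda>i. Xp (\<sigma> i) \<omega>)} = (\<lambda>\<omega>. \<lambda>i\<in>J. Xp (\<sigma> i) \<omega>) -` {y\<in>space (PiM J (\<lambda>_. borel)). G y} \<inter> space M"
  proof (intro set_eqI iffI)
    fix \<omega> assume "\<omega> \<in> {\<omega>\<in>space M. G (\<lambda>i. Xp (\<sigma> i) \<omega>)}"
    moreover have "G (\<lambda>i\<in>J. Xp (\<sigma> i) \<omega>) = G (\<lambda>i. Xp (\<sigma> i) \<omega>)" by (rule Gcong) simp
    ultimately show "\<omega> \<in> (\<lambda>\<omega>. \<lambda>i\<in>J. Xp (\<sigma> i) \<omega>) -` {y\<in>space (PiM J (\<lambda>_. borel)). G y} \<inter> space M"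
      by (simp add: space_PiM)
  next
    fix \<omega> assume "\<omega> \<in> (\<lambda>\<omega>. \<lambda>i\<in>J. Xp (\<sigma> i) \<omega>) -` {y\<in>space (PiM J (\<lambda>_. borel)). G y} \<inter> space M"
    moreover have "G (\<lambda>i\<in>J. Xp (\<sigma> i) \<omega>) = G (\<lambda>i. Xp (\<sigma> i) \<omega>)" by (rule Gcong) simp
    ultimately show "\<omega> \<in> {\<omega>\<in>space M. G (\<lambda>i. Xp (\<sigma> i) \<omega>)}" by simp
  qed
  show "{\<omega>\<in>space M. G (\<lambda>i. Xp (\<sigma> i) \<omega>)} \<in> events"
    unfolding eq by (rule measurable_sets[OF mf Gm])
qed

lemma pattern_indep:
  fixes Xp :: "'i \<Rightarrow> 'a \<Rightarrow> 'b::topological_space" and \<sigma> :: "nat \<Rightarrow> 'j \<Rightarrow> 'i"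
  assumes ind: "indep_vars (\<lambda>_. borel) Xp UNIV"
    and disj: "disjoint_family (\<lambda>j. \<sigma> j ` J)"
    and Gcong: "\<And>x y. (\<And>i. i \<in> J \<Longrightarrow> x i = y i) \<Longrightarrow> G x = G y"
    and Gm: "{y\<in>space (PiM J (\<lambda>_. borel)). G y} \<in> sets (PiM J (\<lambda>_. borel))"
  shows "indep_vars (\<lambda>_. count_space UNIV) (\<lambda>j \<omega>. G (\<lambda>i. Xp (\<sigma> j i) \<omega>)) UNIV"
proof -
  have i1: "indep_vars (\<lambda>j. PiM (\<sigma> j ` J) (\<lambda>_. borel)) (\<lambda>j \<omega>. restrict (\<lambda>i. Xp i \<omega>) (\<sigma> j ` J)) UNIV"
    by (rule indep_vars_restrict[OF ind]) (use disj in \<open>auto simp: disjoint_family_on_def\<close>)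
  have pG: "G \<in> measurable (PiM J (\<lambda>_. borel)) (count_space UNIV)"
    using Gm by (simp add: pred_def)
  have i2: "indep_vars (\<lambda>_. count_space UNIV)
      (\<lambda>j \<omega>. (\<lambda>y. G (\<lambda>n\<in>J. y (\<sigma> j n))) (restrict (\<lambda>i. Xp i \<omega>) (\<sigma> j ` J))) UNIV"
  proof (rule indep_vars_compose2[OF i1])
    fix j :: nat
    have mh: "(\<lambda>y. \<lambda>n\<in>J. y (\<sigma> j n)) \<in> measurable (PiM (\<sigma> j ` J) (\<lambda>_. borel)) (PiM J (\<lambda>_. (borel :: 'b measure)))"
      by (intro measurable_restrict measurable_component_singleton) auto
    show "(\<lambda>y. G (\<lambda>n\<in>J. y (\<sigma> j n))) \<in> measurable (PiM (\<sigma> j ` J) (\<lambda>_. borel)) (count_space UNIV)"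
      using measurable_comp[OF mh pG] by (simp add: comp_def)
  qed
  show ?thesis
  proof (rule indep_vars_cong[THEN iffD1, OF refl _ refl i2])
    fix j :: nat assume "j \<in> UNIV"
    show "(\<lambda>\<omega>. (\<lambda>y. G (\<lambda>n\<in>J. y (\<sigma> j n))) (restrict (\<lambda>i. Xp i \<omega>) (\<sigma> j ` J))) = (\<lambda>\<omega>. G (\<lambda>i. Xp (\<sigma> j i) \<omega>))"
    proof
      fix \<omega>
      show "(\<lambda>y. G (\<lambda>n\<in>J. y (\<sigma> j n))) (restrict (\<lambda>i. Xp i \<omega>) (\<sigma> j ` J)) = G (\<lambda>i. Xp (\<sigma> j i) \<omega>)"
        by simp (rule Gcong, simp)
    qed
  qed
qed

end

lemma margin_perturb:
  fixes a a' A Y :: "'a::real_normed_vector"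
  assumes d: "norm (a - a') \<le> d" and q: "\<bar>q\<bar> \<le> 1"
  shows "norm (q *\<^sub>R a' + A - Y) \<ge> norm (q *\<^sub>R a + A - Y) - d"
    and "norm (a' - Y) \<le> norm (a - Y) + d"
proof -
  have "norm (q *\<^sub>R (a - a')) = \<bar>q\<bar> * norm (a - a')" by simp
  also have "\<dots> \<le> 1 * d" using d q by (intro mult_mono) auto
  finally have h: "norm (q *\<^sub>R (a - a')) \<le> d" by simp
  have "norm (q *\<^sub>R a + A - Y) \<le> norm (q *\<^sub>R a' + A - Y) + norm (q *\<^sub>R (a - a'))"
    using norm_triangle_ineq[of "q *\<^sub>R a' + A - Y" "q *\<^sub>R (a - a')"]
    by (simp add: algebra_simps scaleR_diff_right)
  with h show "norm (q *\<^sub>R a' + A - Y) \<ge> norm (q *\<^sub>R a + A - Y) - d" by simp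
  have "norm (a' - Y) \<le> norm (a - Y) + norm (a' - a)"
    using norm_triangle_ineq[of "a - Y" "a' - a"] by (simp add: algebra_simps)
  with d show "norm (a' - Y) \<le> norm (a - Y) + d" by (simp add: norm_minus_commute)
qed

lemma chi_rec:
  fixes xb :: "int \<Rightarrow> 'a::real_vector" and c q :: real
  shows "(\<Sum>k<K. (c * q ^ k) *\<^sub>R xb (n - int k)) =
     q *\<^sub>R (\<Sum>k<K. (c * q ^ k) *\<^sub>R xb (n - 1 - int k)) + c *\<^sub>R xb n - (c * q ^ K) *\<^sub>R xb (n - int K)"
proof (induction K)
  case 0 thus ?case by simp
next
  case (Suc K)
  have e: "n - 1 - int K = n - int (Suc K)" by simp
  show ?case using Suc by (simp add: scaleR_add_right e algebra_simps)
qed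




definition cK :: "real \<Rightarrow> nat \<Rightarrow> nat \<Rightarrow> (int \<times> int \<Rightarrow> 'b::real_vector) \<Rightarrow> 'b" where
  "cK kg Mb K x = (\<Sum>k<K. (kg * (1 - kg) ^ k / real Mb) *\<^sub>R (\<Sum>m = 1..Mb. x (- int k, int m)))"

definition Av :: "real \<Rightarrow> nat \<Rightarrow> (int \<times> int \<Rightarrow> 'b::real_vector) \<Rightarrow> 'b" where
  "Av kg Mb x = (kg / real Mb) *\<^sub>R (\<Sum>m = 1..Mb. x (1, int m))"

definition Yv :: "nat \<Rightarrow> (int \<times> int \<Rightarrow> 'b::real_vector) \<Rightarrow> 'b" where
  "Yv Mf x = (1 / real Mf) *\<^sub>R (\<Sum>m = 1..Mf. x (2, int m))"

definition Gp :: "real \<Rightarrow> nat \<Rightarrow> nat \<Rightarrow> real \<Rightarrow> nat \<Rightarrow> (int \<times> int \<Rightarrow> 'b::real_normed_vector) \<Rightarrow> bool" where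
  "Gp kg Mb Mf \<delta> K x \<longleftrightarrow>
     norm ((1 - kg) *\<^sub>R cK kg Mb K x + Av kg Mb x - Yv Mf x) > norm (cK kg Mb K x - Yv Mf x) + \<delta>"

definition Jset :: "nat \<Rightarrow> nat \<Rightarrow> nat \<Rightarrow> (int \<times> int) set" where
  "Jset Mb Mf K = ({1 - int K..1} \<times> {1..int Mb}) \<union> ({2} \<times> {1..int Mf})"

definition sig :: "int \<Rightarrow> int \<times> int \<Rightarrow> int \<times> int" where
  "sig n p = (if fst p \<le> 1 then (n - 1 + fst p, snd p) else (n, - snd p))"

lemma Jset_finite: "finite (Jset Mb Mf K)" by (simp add: Jset_def)

lemma Jset_ne: "1 \<le> Mb \<Longrightarrow> Jset Mb Mf K \<noteq> {}"
  by (auto simp: Jset_def)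

lemma Jset_mem:
  "k < K \<Longrightarrow> m \<in> {1..Mb} \<Longrightarrow> (- int k, int m) \<in> Jset Mb Mf K"
  "m \<in> {1..Mb} \<Longrightarrow> (1, int m) \<in> Jset Mb Mf K"
  "m \<in> {1..Mf} \<Longrightarrow> (2, int m) \<in> Jset Mb Mf K"
  by (auto simp: Jset_def)

lemma Gp_cong:
  assumes "\<And>i. i \<in> Jset Mb Mf K \<Longrightarrow> x i = y i"
  shows "Gp kg Mb Mf \<delta> K x = Gp kg Mb Mf \<delta> K y"
proof -
  have "cK kg Mb K x = cK kg Mb K y" unfolding cK_def
    by (intro sum.cong refl arg_cong[where f="\<lambda>v. _ *\<^sub>R v"]) (auto intro!: assms Jset_mem)
  moreover have "Av kg Mb x = Av kg Mb y" unfolding Av_def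
    by (intro sum.cong refl arg_cong[where f="\<lambda>v. _ *\<^sub>R v"]) (auto intro!: assms Jset_mem)
  moreover have "Yv Mf x = Yv Mf y" unfolding Yv_def
    by (intro sum.cong refl arg_cong[where f="\<lambda>v. _ *\<^sub>R v"]) (auto intro!: assms Jset_mem)
  ultimately show ?thesis by (simp add: Gp_def)
qed

lemma Gp_meas:
  "{y \<in> space (PiM (Jset Mb Mf K) (\<lambda>_. borel)). Gp kg Mb Mf \<delta> K (y :: int \<times> int \<Rightarrow> real^'d)}
     \<in> sets (PiM (Jset Mb Mf K) (\<lambda>_. borel))"
proof -
  let ?P = "PiM (Jset Mb Mf K) (\<lambda>_. (borel :: (real^'d) measure))"
  have comp: "\<And>i. i \<in> Jset Mb Mf K \<Longrightarrow> (\<lambda>y. y i) \<in> borel_measurable ?P"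
    by (rule measurable_component_singleton)
  have [measurable]: "cK kg Mb K \<in> borel_measurable ?P"
    unfolding cK_def
    by (intro borel_measurable_sum borel_measurable_scaleR borel_measurable_const comp Jset_mem) auto
  have [measurable]: "Av kg Mb \<in> borel_measurable ?P"
    unfolding Av_def
    by (intro borel_measurable_sum borel_measurable_scaleR borel_measurable_const comp Jset_mem) auto
  have [measurable]: "Yv Mf \<in> borel_measurable ?P"
    unfolding Yv_def
    by (intro borel_measurable_sum borel_measurable_scaleR borel_measurable_const comp Jset_mem) auto
  show ?thesis unfolding Gp_def by measurable
qed

lemma sig_inj: "inj_on (sig n) (Jset Mb Mf K)"
  by (auto simp: inj_on_def sig_def Jset_def split: if_splits)

lemma sig_rows: "p \<in> Jset Mb Mf K \<Longrightarrow> n - int K \<le> fst (sig n p) \<and> fst (sig n p) \<le> n"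
  by (auto simp: sig_def Jset_def)

lemma sig_disj:
  "disjoint_family (\<lambda>j::nat. sig (int ((j + 1) * (K + 1))) ` Jset Mb Mf K)"
proof -
  have key: "j = j'" if "int j * (int K + 1) < a" "a \<le> (int j + 1) * (int K + 1)"
      "int j' * (int K + 1) < a" "a \<le> (int j' + 1) * (int K + 1)" for j j' :: nat and a :: int
  proof (rule ccontr)
    assume "j \<noteq> j'"
    hence "int j + 1 \<le> int j' \<or> int j' + 1 \<le> int j" by auto
    thus False
    proof
      assume "int j + 1 \<le> int j'"
      hence "(int j + 1) * (int K + 1) \<le> int j' * (int K + 1)" by (intro mult_right_mono) auto
      thus False using that by linarith
    next
      assume "int j' + 1 \<le> int j"
      hence "(int j' + 1) * (int K + 1) \<le> int j * (int K + 1)" by (intro mult_right_mono) auto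
      thus False using that by linarith
    qed
  qed
  show ?thesis unfolding disjoint_family_on_def
  proof (intro ballI impI)
    fix j j' :: nat assume "j \<in> UNIV" "j' \<in> UNIV" "j \<noteq> j'"
    show "sig (int ((j + 1) * (K + 1))) ` Jset Mb Mf K \<inter> sig (int ((j' + 1) * (K + 1))) ` Jset Mb Mf K = {}"
    proof (rule ccontr)
      assume "\<not> ?thesis"
      then obtain p p' where p: "p \<in> Jset Mb Mf K" "p' \<in> Jset Mb Mf K"
        and e: "sig (int ((j + 1) * (K + 1))) p = sig (int ((j' + 1) * (K + 1))) p'" by blast
      let ?a = "fst (sig (int ((j + 1) * (K + 1))) p)"
      have r1: "int ((j + 1) * (K + 1)) - int K \<le> ?a \<and> ?a \<le> int ((j + 1) * (K + 1))" by (rule sig_rows[OF p(1)])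
      have r2: "int ((j' + 1) * (K + 1)) - int K \<le> ?a \<and> ?a \<le> int ((j' + 1) * (K + 1))"
        unfolding e by (rule sig_rows[OF p(2)])
      have "j = j'"
        by (rule key[of j ?a j']) (use r1 r2 in \<open>simp_all add: algebra_simps\<close>)
      with \<open>j \<noteq> j'\<close> show False by simp
    qed
  qed
qed





theorem proposition5p5:
  fixes \<kappa> \<gamma> :: real
    and l :: "real^'d \<Rightarrow> real^'d \<Rightarrow> real"
    and M :: "'w measure"
    and X :: "int \<Rightarrow> int \<Rightarrow> 'w \<Rightarrow> real^'d"
    and Mb Mf N :: nat
    and \<Theta> :: "nat \<Rightarrow> 'w \<Rightarrow> real^'d"
  assumes kappa: "0 < \<kappa>"
    and l_def: "\<And>\<theta> \<theta>'. l \<theta> \<theta>' = \<kappa> / 2 * (norm (\<theta> - \<theta>'))\<^sup>2"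
    and gamma: "0 < \<gamma>" "\<gamma> < 2 / \<kappa>"
    and P: "prob_space M"
    and X_rv: "\<And>n m. X n m \<in> borel_measurable M"
    and X_indep: "prob_space.indep_vars M (\<lambda>_. borel) (\<lambda>(n, m). X n m) UNIV"
    and X_ident: "\<And>n m. distr M borel (X n m) = distr M borel (X 0 0)"
    and Mb: "1 \<le> Mb" and Mf: "1 \<le> Mf"
    and rec: "\<And>n \<omega>. 1 \<le> n \<Longrightarrow> \<omega> \<in> space M \<Longrightarrow>
       \<Theta> n \<omega> = \<Theta> (n - 1) \<omega> - (\<gamma> / real Mb) *\<^sub>R
         (\<Sum>m = 1..Mb. gradient (\<lambda>\<theta>. l \<theta> (X (int n) (int m) \<omega>)) (\<Theta> (n - 1) \<omega>))"
    and X_bdd: "\<And>\<omega>. \<omega> \<in> space M \<Longrightarrow> bdd_above (range (\<lambda>(n, m). norm (X n m \<omega>)))"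
    and Theta0_rv: "\<Theta> 0 \<in> borel_measurable M"
    and indep_Theta0: "prob_space.indep_set M
       (sigma_sets (space M) (\<Union>p. {X (fst p) (snd p) -` A \<inter> space M | A. A \<in> sets borel}))
       (sigma_sets (space M) {\<Theta> 0 -` A \<inter> space M | A. A \<in> sets borel})"
    and pos: "measure M {\<omega> \<in> space M.
       let chi = (\<Sum>n. (\<kappa> * \<gamma> * (1 - \<kappa> * \<gamma>) ^ n / real Mb) *\<^sub>R
                      (\<Sum>m = 1..Mb. X (- int n) (int m) \<omega>));
           Y = (1 / real Mf) *\<^sub>R (\<Sum>m = 1..Mf. X 2 (int m) \<omega>)
       in norm ((1 - \<kappa> * \<gamma>) *\<^sub>R chi + (\<kappa> * \<gamma> / real Mb) *\<^sub>R (\<Sum>m = 1..Mb. X 1 (int m) \<omega>) - Y)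
          > norm (chi - Y)} > 0"
    and N: "1 \<le> N"
  shows "measure M {\<omega> \<in> space M. \<exists>n \<ge> N.
           (\<Sum>m = 1..Mf. l (\<Theta> n \<omega>) (X (int n) (- int m) \<omega>))
         > (\<Sum>m = 1..Mf. l (\<Theta> (n - 1) \<omega>) (X (int n) (- int m) \<omega>))} = 1"
  proof -
  interpret prob_space M by (rule P)
  define kg where "kg = \<kappa> * \<gamma>"
  define q where "q = 1 - kg"
  have kg0: "0 < kg" using kappa gamma by (simp add: kg_def)
  have kg2: "kg < 2" using gamma(2) kappa unfolding kg_def by (simp add: field_simps mult.commute)
  have q1: "\<bar>q\<bar> < 1" using kg0 kg2 by (simp add: q_def abs_less_iff)
  have Mb0: "real Mb > 0" using Mb by simp
  have Mf0: "real Mf > 0" using Mf by simp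
  define Xp where "Xp = (\<lambda>(n, m). X n m)"
  have Xp_ind: "indep_vars (\<lambda>_. borel) Xp UNIV" using X_indep by (simp add: Xp_def)
  define D where "D = distr M borel (X 0 0)"
  have Xp_D: "distr M borel (Xp i) = D" for i
  proof -
    obtain n m where "i = (n, m)" by (cases i)
    thus ?thesis using X_ident[of n m] by (simp add: Xp_def D_def)
  qed
  have Xm[measurable]: "\<And>n m. X n m \<in> borel_measurable M" by (rule X_rv)
  have grad: "gradient (\<lambda>\<theta>. l \<theta> x) t = \<kappa> *\<^sub>R (t - x)" for x t
  proof -
    have "(\<lambda>\<theta>. l \<theta> x) = (\<lambda>\<theta>. \<kappa> / 2 * (norm (\<theta> - x))\<^sup>2)" by (simp add: l_def)
    show ?thesis unfolding \<open>(\<lambda>\<theta>. l \<theta> x) = _\<close> by (rule gradient_sq)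
  qed
  define xb where "xb r \<omega> = (1 / real Mb) *\<^sub>R (\<Sum>m = 1..Mb. X r (int m) \<omega>)" for r \<omega>
  have recur: "\<Theta> n \<omega> = q *\<^sub>R \<Theta> (n - 1) \<omega> + kg *\<^sub>R xb (int n) \<omega>"
    if n: "1 \<le> n" and \<omega>: "\<omega> \<in> space M" for n \<omega>
  proof -
    let ?a = "\<Theta> (n - 1) \<omega>"
    let ?S = "\<Sum>m = 1..Mb. X (int n) (int m) \<omega>"
    have "(\<Sum>m = 1..Mb. gradient (\<lambda>\<theta>. l \<theta> (X (int n) (int m) \<omega>)) ?a)
        = (\<Sum>m = 1..Mb. \<kappa> *\<^sub>R (?a - X (int n) (int m) \<omega>))" by (simp add: grad)
    also have "\<dots> = (\<Sum>m = 1..Mb. \<kappa> *\<^sub>R ?a) - \<kappa> *\<^sub>R ?S"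
      by (simp only: scaleR_diff_right sum_subtractf scaleR_sum_right)
    also have "(\<Sum>m = 1..Mb. \<kappa> *\<^sub>R ?a) = (\<kappa> * real Mb) *\<^sub>R ?a"
      by (simp only: sum_constant_scaleR card_atLeastAtMost) simp
    finally have "\<Theta> n \<omega> = ?a - (\<gamma> / real Mb) *\<^sub>R ((\<kappa> * real Mb) *\<^sub>R ?a - \<kappa> *\<^sub>R ?S)"
      using rec[OF n \<omega>] by simp
    also have "\<dots> = q *\<^sub>R ?a + kg *\<^sub>R xb (int n) \<omega>"
      using Mb0 by (simp add: xb_def q_def kg_def algebra_simps scaleR_diff_right)
    finally show ?thesis .
  qed
  have Thm[measurable]: "\<Theta> n \<in> borel_measurable M" for n
  proof (induction n)
    case 0 show ?case by (rule Theta0_rv)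
  next
    case (Suc n)
    note Suc[measurable]
    have mr: "(\<lambda>\<omega>. q *\<^sub>R \<Theta> n \<omega> + kg *\<^sub>R xb (int (Suc n)) \<omega>) \<in> borel_measurable M"
      unfolding xb_def by measurable
    have eq: "\<And>\<omega>. \<omega> \<in> space M \<Longrightarrow> \<Theta> (Suc n) \<omega> = q *\<^sub>R \<Theta> n \<omega> + kg *\<^sub>R xb (int (Suc n)) \<omega>"
      using recur[of "Suc n"] by simp
    have "\<Theta> (Suc n) \<in> borel_measurable M \<longleftrightarrow> (\<lambda>\<omega>. q *\<^sub>R \<Theta> n \<omega> + kg *\<^sub>R xb (int (Suc n)) \<omega>) \<in> borel_measurable M"
      by (rule measurable_cong) (rule eq)
    with mr show ?case by blast
  qed
  obtain b where AEb: "AE \<omega> in M. \<forall>n m. norm (X n m \<omega>) \<le> b"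
    using ess_bound[OF X_indep X_ident X_bdd] by blast
  define b0 where "b0 = max b 0"
  have b00: "0 \<le> b0" by (simp add: b0_def)
  have AEb0: "AE \<omega> in M. \<forall>n m. norm (X n m \<omega>) \<le> b0"
    using AEb by eventually_elim (simp add: b0_def le_max_iff_disj)
  have xbb: "norm (xb r \<omega>) \<le> b0" if bd: "\<forall>n m. norm (X n m \<omega>) \<le> b0" for r \<omega>
  proof -
    have "norm (\<Sum>m = 1..Mb. X r (int m) \<omega>) \<le> (\<Sum>m = 1..Mb. norm (X r (int m) \<omega>))" by (rule norm_sum)
    also have "\<dots> \<le> (\<Sum>m = 1..Mb. b0)" by (intro sum_mono) (use bd in auto)
    also have "\<dots> = real Mb * b0" by simp
    finally have "norm (\<Sum>m = 1..Mb. X r (int m) \<omega>) \<le> real Mb * b0" .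
    thus ?thesis using Mb0 by (simp add: xb_def field_simps)
  qed
  define T where "T K = kg * b0 * \<bar>q\<bar> ^ K / (1 - \<bar>q\<bar>)" for K :: nat
  have T0: "0 \<le> T K" for K using kg0 b00 q1 by (simp add: T_def)
  have Tlim: "T \<longlonglongrightarrow> 0"
  proof -
    have "(\<lambda>K. kg * b0 * \<bar>q\<bar> ^ K / (1 - \<bar>q\<bar>)) \<longlonglongrightarrow> kg * b0 * 0 / (1 - \<bar>q\<bar>)"
      using q1 by (intro tendsto_intros LIMSEQ_power_zero) auto
    thus ?thesis by (simp add: T_def[abs_def])
  qed
  have Tex: "\<exists>K. T K \<le> e" if "0 < e" for e
  proof -
    have "eventually (\<lambda>K. T K < e) sequentially" using order_tendstoD(2)[OF Tlim that] .
    then obtain K where "T K < e" by (auto simp: eventually_sequentially)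
    thus ?thesis by (intro exI[of _ K]) simp
  qed
  define Kj where "Kj j = (SOME K. T K \<le> 1 / (4 * (real j + 1)))" for j :: nat
  have Kj: "T (Kj j) \<le> 1 / (4 * (real j + 1))" for j
    unfolding Kj_def by (rule someI_ex, rule Tex) simp
  define J where "J j = Jset Mb Mf (Kj j)" for j
  define G :: "nat \<Rightarrow> (int \<times> int \<Rightarrow> real^'d) \<Rightarrow> bool" where "G j = Gp kg Mb Mf (1 / (real j + 1)) (Kj j)" for j
  have Gc: "G j x = G j y" if "\<And>i. i \<in> J j \<Longrightarrow> x i = y i" for j x y
    unfolding G_def by (rule Gp_cong) (use that in \<open>simp add: J_def\<close>)
  have Gm: "{y\<in>space (PiM (J j) (\<lambda>_. borel)). G j y} \<in> sets (PiM (J j) (\<lambda>_. borel))" for j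
    unfolding G_def J_def by (rule Gp_meas)
  define Fs where "Fs j = {\<omega>\<in>space M. G j (\<lambda>i. Xp i \<omega>)}" for j
  have Fs_ev: "Fs j \<in> events" for j
    using pattern_event(2)[OF Xp_ind, of "J j" "G j" "\<lambda>i. i", OF Gc Gm] by (simp add: Fs_def)
  define PS where "PS = {\<omega> \<in> space M.
       let chi = (\<Sum>n. (\<kappa> * \<gamma> * (1 - \<kappa> * \<gamma>) ^ n / real Mb) *\<^sub>R
                      (\<Sum>m = 1..Mb. X (- int n) (int m) \<omega>));
           Y = (1 / real Mf) *\<^sub>R (\<Sum>m = 1..Mf. X 2 (int m) \<omega>)
       in norm ((1 - \<kappa> * \<gamma>) *\<^sub>R chi + (\<kappa> * \<gamma> / real Mb) *\<^sub>R (\<Sum>m = 1..Mb. X 1 (int m) \<omega>) - Y)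
          > norm (chi - Y)}"
  have PSpos: "prob PS > 0" using pos unfolding PS_def .
  have PSev: "PS \<in> events" using PSpos measure_notin_sets[of PS M] by fastforce
  have incl: "\<exists>j. \<omega> \<in> Fs j" if \<omega>PS: "\<omega> \<in> PS" and bd: "\<forall>n m. norm (X n m \<omega>) \<le> b0" for \<omega>
  proof -
    have \<omega>s: "\<omega> \<in> space M" using \<omega>PS by (simp add: PS_def)
    define v where "v n = (kg * (1 - kg) ^ n / real Mb) *\<^sub>R (\<Sum>m = 1..Mb. X (- int n) (int m) \<omega>)" for n
    have vx: "v n = (kg * q ^ n) *\<^sub>R xb (- int n) \<omega>" for n
      by (simp add: v_def xb_def q_def)
    have vb: "norm (v n) \<le> (kg * b0) * \<bar>q\<bar> ^ n" for n
    proof -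
      have "norm (v n) = kg * \<bar>q\<bar> ^ n * norm (xb (- int n) \<omega>)"
        using kg0 by (simp add: vx abs_mult power_abs)
      also have "\<dots> \<le> kg * \<bar>q\<bar> ^ n * b0" using xbb[OF bd] kg0 by (intro mult_left_mono) auto
      finally show ?thesis by (simp add: mult_ac)
    qed
    define chi where "chi = suminf v"
    have tb: "norm (chi - (\<Sum>n<K. v n)) \<le> T K" for K
      using tail_bound(2)[of v "kg * b0" "\<bar>q\<bar>" K, OF vb] q1 by (simp add: T_def chi_def)
    define A where "A = (kg / real Mb) *\<^sub>R (\<Sum>m = 1..Mb. X 1 (int m) \<omega>)"
    define Y where "Y = (1 / real Mf) *\<^sub>R (\<Sum>m = 1..Mf. X 2 (int m) \<omega>)"
    have mg: "norm (q *\<^sub>R chi + A - Y) > norm (chi - Y)"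
      using \<omega>PS unfolding PS_def Let_def chi_def v_def A_def Y_def q_def kg_def by simp
    define e0 where "e0 = norm (q *\<^sub>R chi + A - Y) - norm (chi - Y)"
    have e0: "0 < e0" using mg by (simp add: e0_def)
    obtain n0 :: nat where n0: "0 < n0" "inverse (real n0) < e0 / 2"
      using ex_inverse_of_nat_less[of "e0 / 2"] e0 by auto
    define j where "j = n0 - 1"
    define \<delta> where "\<delta> = 1 / (real j + 1)"
    have jn: "real j + 1 = real n0" using n0(1) by (simp add: j_def of_nat_diff)
    have \<delta>: "\<delta> = inverse (real n0)" by (simp only: \<delta>_def jn inverse_eq_divide)
    have \<delta>0: "0 < \<delta>" by (simp add: \<delta>_def)
    define c' where "c' = (\<Sum>n<Kj j. v n)"
    have "1 / (4 * (real j + 1)) = \<delta> / 4" by (simp add: \<delta>_def)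
    hence "T (Kj j) \<le> \<delta> / 4" using Kj[of j] by linarith
    hence cc: "norm (chi - c') \<le> \<delta> / 4"
      using tb[of "Kj j"] unfolding c'_def by linarith
    have q1': "\<bar>q\<bar> \<le> 1" using q1 by simp
    have mp1: "norm (q *\<^sub>R c' + A - Y) \<ge> norm (q *\<^sub>R chi + A - Y) - \<delta> / 4"
      by (rule margin_perturb(1)[OF cc q1'])
    have mp2: "norm (c' - Y) \<le> norm (chi - Y) + \<delta> / 4"
      by (rule margin_perturb(2)[OF cc q1'])
    have gp: "norm (q *\<^sub>R c' + A - Y) > norm (c' - Y) + \<delta>"
    proof -
      have d2: "\<delta> < e0 / 2" using n0(2) \<delta> by simp
      have ar: "y + d < x" if "d < (a - b) / 2" "a - d / 4 \<le> x" "y \<le> b + d / 4" "0 < d"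
        for a b x y d :: real using that by argo
      show ?thesis by (rule ar[OF d2[unfolded e0_def] mp1 mp2 \<delta>0])
    qed
    have cKe: "cK kg Mb (Kj j) (\<lambda>i. Xp i \<omega>) = c'"
      by (simp add: cK_def c'_def v_def Xp_def)
    have Ae: "Av kg Mb (\<lambda>i. Xp i \<omega>) = A" by (simp add: Av_def A_def Xp_def)
    have Ye: "Yv Mf (\<lambda>i. Xp i \<omega>) = Y" by (simp add: Yv_def Y_def Xp_def)
    have "G j (\<lambda>i. Xp i \<omega>)"
      unfolding G_def Gp_def cKe Ae Ye using gp by (simp add: q_def \<delta>_def)
    thus ?thesis using \<omega>s by (auto simp: Fs_def)
  qed
  have "\<exists>j0. prob (Fs j0) > 0"
  proof (rule ccontr)
    assume "\<not> ?thesis"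
    hence "prob (Fs j) = 0" for j using measure_nonneg[of M "Fs j"] by (meson antisym not_less)
    hence "AE \<omega> in M. \<omega> \<notin> Fs j" for j using prob_eq_0[OF Fs_ev] by blast
    hence "AE \<omega> in M. \<forall>j. \<omega> \<notin> Fs j" by (simp add: AE_all_countable)
    with AEb0 have "AE \<omega> in M. \<omega> \<notin> PS" by eventually_elim (use incl in blast)
    hence "prob PS = 0" using prob_eq_0[OF PSev] by simp
    with PSpos show False by simp
  qed
  then obtain j0 where pj0: "prob (Fs j0) > 0" by blast
  define K where "K = Kj j0"
  define \<delta> where "\<delta> = 1 / (real j0 + 1)"
  have \<delta>0: "0 < \<delta>" by (simp add: \<delta>_def)
  have "1 / (4 * (real j0 + 1)) = \<delta> / 4" by (simp add: \<delta>_def)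
  hence TK: "T K \<le> \<delta> / 4" using Kj[of j0] unfolding K_def by linarith
  define nj where "nj i = int ((i + 1) * (K + 1))" for i :: nat
  define Z where "Z i \<omega> = G j0 (\<lambda>p. Xp (sig (nj i) p) \<omega>)" for i \<omega>
  have Jfin: "finite (J j0)" by (simp add: J_def Jset_finite)
  have Jne: "J j0 \<noteq> {}" using Mb by (simp add: J_def Jset_ne)
  have disj: "disjoint_family (\<lambda>i. sig (nj i) ` J j0)"
    unfolding nj_def J_def K_def by (rule sig_disj)
  have Zind: "indep_vars (\<lambda>_. count_space UNIV) Z UNIV"
    unfolding Z_def by (rule pattern_indep[OF Xp_ind disj Gc Gm])
  define S where "S = {y\<in>space (PiM (J j0) (\<lambda>_. borel)). G j0 y}"
  have pS: "prob {\<omega>\<in>space M. G j0 (\<lambda>p. Xp (\<sigma> p) \<omega>)} = measure (PiM (J j0) (\<lambda>_. D)) S"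
    if inj: "inj_on \<sigma> (J j0)" for \<sigma>
  proof -
    have e1: "{\<omega>\<in>space M. G j0 (\<lambda>p. Xp (\<sigma> p) \<omega>)} = (\<lambda>\<omega>. \<lambda>i\<in>J j0. Xp (\<sigma> i) \<omega>) -` S \<inter> space M"
      unfolding S_def by (rule pattern_event(1)[OF Xp_ind Gc Gm])
    have Sm: "S \<in> sets (PiM (J j0) (\<lambda>_. borel))" unfolding S_def by (rule Gm)
    show ?thesis unfolding e1 by (rule pattern_prob[OF Xp_ind Xp_D Jfin Jne inj Sm])
  qed
  have Zprob: "prob {\<omega>\<in>space M. Z i \<omega>} = prob (Fs j0)" for i
  proof -
    have "prob {\<omega>\<in>space M. Z i \<omega>} = measure (PiM (J j0) (\<lambda>_. D)) S"
      unfolding Z_def by (rule pS) (simp add: J_def sig_inj)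
    moreover have "prob (Fs j0) = measure (PiM (J j0) (\<lambda>_. D)) S"
      using pS[of "\<lambda>p. p"] by (simp add: Fs_def)
    ultimately show ?thesis by simp
  qed
  have AEinf: "AE \<omega> in M. \<forall>n. \<exists>i\<ge>n. Z i \<omega>"
    by (rule bc2[OF Zind Zprob pj0])
  define CS where "CS = {\<omega> \<in> space M. \<exists>n \<ge> N.
           (\<Sum>m = 1..Mf. l (\<Theta> n \<omega>) (X (int n) (- int m) \<omega>))
         > (\<Sum>m = 1..Mf. l (\<Theta> (n - 1) \<omega>) (X (int n) (- int m) \<omega>))}"
  have CSev: "CS \<in> events" unfolding CS_def l_def by measurable
  have "AE \<omega> in M. \<omega> \<in> CS"
    using AEinf AEb0 AE_space
  proof eventually_elim
    case (elim \<omega>)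
    note inf = elim(1) and bd = elim(2) and \<omega>s = elim(3)
    define cn where "cn n = (\<Sum>k<K. (kg * q ^ k) *\<^sub>R xb (int n - int k) \<omega>)" for n :: nat
    define Dn where "Dn n = \<Theta> n \<omega> - cn n" for n
    have Drec: "Dn (Suc n) = q *\<^sub>R Dn n + (kg * q ^ K) *\<^sub>R xb (int (Suc n) - int K) \<omega>" for n
    proof -
      have c0: "cn (Suc n) = q *\<^sub>R (\<Sum>k<K. (kg * q ^ k) *\<^sub>R xb (int (Suc n) - 1 - int k) \<omega>)
          + kg *\<^sub>R xb (int (Suc n)) \<omega> - (kg * q ^ K) *\<^sub>R xb (int (Suc n) - int K) \<omega>"
        unfolding cn_def by (rule chi_rec[where xb = "\<lambda>r. xb r \<omega>"])
      have c1: "(\<Sum>k<K. (kg * q ^ k) *\<^sub>R xb (int (Suc n) - 1 - int k) \<omega>) = cn n"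
        unfolding cn_def by simp
      have r: "\<Theta> (Suc n) \<omega> = q *\<^sub>R \<Theta> n \<omega> + kg *\<^sub>R xb (int (Suc n)) \<omega>"
        using recur[of "Suc n" \<omega>] \<omega>s by simp
      show ?thesis unfolding Dn_def r c0 c1 by (simp add: algebra_simps scaleR_diff_right)
    qed
    have Dbound: "norm (Dn n) \<le> \<bar>q\<bar> ^ n * norm (Dn 0) + T K" for n
    proof (induction n)
      case 0 show ?case using T0[of K] by simp
    next
      case (Suc n)
      have tri: "norm (Dn (Suc n)) \<le> norm (q *\<^sub>R Dn n) + norm ((kg * q ^ K) *\<^sub>R xb (int (Suc n) - int K) \<omega>)"
        unfolding Drec by (rule norm_triangle_ineq)
      have e1: "norm (q *\<^sub>R Dn n) = \<bar>q\<bar> * norm (Dn n)" by simp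
      have e2: "norm ((kg * q ^ K) *\<^sub>R xb (int (Suc n) - int K) \<omega>) = kg * \<bar>q\<bar> ^ K * norm (xb (int (Suc n) - int K) \<omega>)"
        using kg0 by (simp add: abs_mult power_abs)
      have e3: "kg * \<bar>q\<bar> ^ K * norm (xb (int (Suc n) - int K) \<omega>) \<le> kg * \<bar>q\<bar> ^ K * b0"
        using xbb[OF bd] kg0 by (intro mult_left_mono) auto
      have h2: "\<bar>q\<bar> * norm (Dn n) \<le> \<bar>q\<bar> * (\<bar>q\<bar> ^ n * norm (Dn 0) + T K)"
        by (rule mult_left_mono[OF Suc.IH]) simp
      have h3: "\<bar>q\<bar> * T K + kg * \<bar>q\<bar> ^ K * b0 = T K" unfolding T_def using q1 by (simp add: field_simps)
      have h4: "\<bar>q\<bar> * (\<bar>q\<bar> ^ n * norm (Dn 0) + T K) = \<bar>q\<bar> ^ Suc n * norm (Dn 0) + \<bar>q\<bar> * T K"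
        by (simp add: algebra_simps)
      show ?case using tri e1 e2 e3 h2 h3 h4 by linarith
    qed
    have lim: "(\<lambda>n. \<bar>q\<bar> ^ n * norm (Dn 0)) \<longlonglongrightarrow> 0"
      using tendsto_mult[OF LIMSEQ_power_zero[of "\<bar>q\<bar>"] tendsto_const[of "norm (Dn 0)"]] q1 by simp
    have "eventually (\<lambda>n. \<bar>q\<bar> ^ n * norm (Dn 0) < \<delta> / 4) sequentially"
      using order_tendstoD(2)[OF lim, of "\<delta> / 4"] \<delta>0 by simp
    then obtain n0 where n0: "\<And>n. n \<ge> n0 \<Longrightarrow> \<bar>q\<bar> ^ n * norm (Dn 0) < \<delta> / 4"
      by (auto simp: eventually_sequentially)
    from inf obtain i where i: "i \<ge> n0 + N" "Z i \<omega>" by blast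
    define n where "n = (i + 1) * (K + 1)"
    have n_ge: "(i + 1) * 1 \<le> n" unfolding n_def by (intro mult_le_mono2) simp
    have n1: "1 \<le> n" "N \<le> n" "n0 \<le> n - 1" using n_ge i(1) by auto
    have njn: "nj i = int n" by (simp add: nj_def n_def)
    have Zi: "Gp kg Mb Mf \<delta> K (\<lambda>p. Xp (sig (int n) p) \<omega>)"
      using i(2) by (simp add: Z_def G_def K_def \<delta>_def njn)
    have sig1: "sig (int n) (- int k, int m) = (int (n - 1) - int k, int m)" for k m
      using n1(1) by (simp add: sig_def of_nat_diff)
    have sig2: "sig (int n) (1, int m) = (int n, int m)" for m by (simp add: sig_def)
    have sig3: "sig (int n) (2, int m) = (int n, - int m)" for m by (simp add: sig_def)
    have cKe: "cK kg Mb K (\<lambda>p. Xp (sig (int n) p) \<omega>) = cn (n - 1)"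
      unfolding cK_def cn_def xb_def q_def by (simp add: sig1 Xp_def)
    have Ae: "Av kg Mb (\<lambda>p. Xp (sig (int n) p) \<omega>) = kg *\<^sub>R xb (int n) \<omega>"
      unfolding Av_def xb_def by (simp add: sig2 Xp_def)
    define Yn where "Yn = (1 / real Mf) *\<^sub>R (\<Sum>m = 1..Mf. X (int n) (- int m) \<omega>)"
    have Ye: "Yv Mf (\<lambda>p. Xp (sig (int n) p) \<omega>) = Yn"
      unfolding Yv_def Yn_def by (simp add: sig3 Xp_def)
    have gp: "norm (q *\<^sub>R cn (n - 1) + kg *\<^sub>R xb (int n) \<omega> - Yn) > norm (cn (n - 1) - Yn) + \<delta>"
      using Zi unfolding Gp_def cKe Ae Ye q_def .
    have dd: "norm (cn (n - 1) - \<Theta> (n - 1) \<omega>) \<le> \<delta> / 2"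
    proof -
      have "norm (cn (n - 1) - \<Theta> (n - 1) \<omega>) = norm (Dn (n - 1))"
        by (simp add: Dn_def norm_minus_commute)
      also have "\<dots> \<le> \<bar>q\<bar> ^ (n - 1) * norm (Dn 0) + T K" by (rule Dbound)
      finally show ?thesis using n0[OF n1(3)] TK by argo
    qed
    have q1': "\<bar>q\<bar> \<le> 1" using q1 by simp
    have mp1: "norm (q *\<^sub>R \<Theta> (n - 1) \<omega> + kg *\<^sub>R xb (int n) \<omega> - Yn)
        \<ge> norm (q *\<^sub>R cn (n - 1) + kg *\<^sub>R xb (int n) \<omega> - Yn) - \<delta> / 2"
      by (rule margin_perturb(1)[OF dd q1'])
    have mp2: "norm (\<Theta> (n - 1) \<omega> - Yn) \<le> norm (cn (n - 1) - Yn) + \<delta> / 2"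
      by (rule margin_perturb(2)[OF dd q1'])
    have rn: "\<Theta> n \<omega> = q *\<^sub>R \<Theta> (n - 1) \<omega> + kg *\<^sub>R xb (int n) \<omega>" by (rule recur[OF n1(1) \<omega>s])
    have "norm (\<Theta> n \<omega> - Yn) > norm (\<Theta> (n - 1) \<omega> - Yn)"
      unfolding rn using gp mp1 mp2 by argo
    hence "(\<Sum>m = 1..Mf. \<kappa> / 2 * (norm (\<Theta> n \<omega> - X (int n) (- int m) \<omega>))\<^sup>2)
        > (\<Sum>m = 1..Mf. \<kappa> / 2 * (norm (\<Theta> (n - 1) \<omega> - X (int n) (- int m) \<omega>))\<^sup>2)"
      unfolding Yn_def by (rule sumsq_ineq[OF kappa Mf])
    hence ineq: "(\<Sum>m = 1..Mf. l (\<Theta> n \<omega>) (X (int n) (- int m) \<omega>))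
         > (\<Sum>m = 1..Mf. l (\<Theta> (n - 1) \<omega>) (X (int n) (- int m) \<omega>))"
      by (simp only: l_def)
    show ?case unfolding CS_def using \<omega>s n1(2) ineq by blast
  qed
  hence "prob CS = 1" using prob_eq_1[OF CSev] by simp
  thus ?thesis unfolding CS_def .
qed


end
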